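(* $$\sum_{n=0}^\infty \frac{\binom{2n}{n}}{(n+1)^3\, 2^{2n}} = 8 - 8\log 2 - \frac{\pi^2}{3} + 4(\log 2)^2.$$
   Context: $\binom{2n}{n}$ is the central binomial coefficient; $\log$ is the natural logarithm. *)

theory Defs
  imports Complex_Main
begin

end

theory Submission
  imports Defs "HOL-Analysis.Analysis" "HOL-Real_Asymp.Real_Asymp"
begin

definition cc :: "nat \<Rightarrow> real" where "cc n = real ((2*n) choose n) / 4^n"

lemma cc_0 [simp]: "cc 0 = 1" by (simp add: cc_def)

lemma cc_Suc: "cc (Suc n) = cc n * (2*n+1) / (2*n+2)"
proof -
  have a: "real ((2*n) choose n) = fact (2*n) / (fact n * fact n)"
    by (simp add: binomial_fact)
  have le: "Suc n \<le> Suc (Suc (2*n))" by simp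
  have b0: "real (Suc (Suc (2*n)) choose Suc n) = fact (Suc (Suc (2*n))) / (fact (Suc n) * fact (Suc (Suc (2*n)) - Suc n))"
    by (rule binomial_fact[OF le])
  have e: "Suc (Suc (2*n)) - Suc n = Suc n" by simp
  have b: "real (Suc (Suc (2*n)) choose Suc n) = fact (Suc (Suc (2*n))) / (fact (Suc n) * fact (Suc n))"
    using b0 unfolding e .
  have c: "fact (Suc (Suc (2*n))) = (2*real n+2)*(2*real n+1) * (fact (2*n) :: real)"
    by (simp add: algebra_simps)
  have c2: "fact (Suc n) * fact (Suc n) * (4::real) ^ Suc n = (2*real n+2)*(2*real n+2) * (fact n * fact n * 4^n)"
    by (simp add: algebra_simps)
  have d: "2 * Suc n = Suc (Suc (2*n))" by simp
  have gen: "p*q*F/(p*p*X) = (F/X)*q/p" if "p > 0" "X > 0" for p q F X :: real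
    using that by (simp add: field_simps)
  have "cc (Suc n) = fact (Suc (Suc (2*n))) / (fact (Suc n) * fact (Suc n) * 4 ^ Suc n)"
    unfolding cc_def d b by simp
  also have "\<dots> = (2*real n+2)*(2*real n+1) * fact (2*n) / ((2*real n+2)*(2*real n+2) * (fact n * fact n * 4^n))"
    unfolding c c2 ..
  also have "\<dots> = (fact (2*n) / (fact n * fact n * 4^n)) * (2*real n+1) / (2*real n+2)"
    by (rule gen) auto
  also have "\<dots> = cc n * (2*n+1) / (2*n+2)"
    unfolding cc_def a by (simp add: add.commute)
  finally show ?thesis .
qed

lemma cc_gchoose: "cc n = (-1)^n * ((-1/2) gchoose n)"
proof (induction n)
  case (Suc n)
  have "(-1/2::real) * ((-1/2) gchoose n) = of_nat n * ((-1/2) gchoose n) + of_nat (Suc n) * ((-1/2) gchoose (Suc n))"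
    by (rule gbinomial_mult_1)
  hence g: "((-1/2::real) gchoose (Suc n)) = (-1/2 - n) * ((-1/2) gchoose n) / (n+1)"
    by (simp add: field_simps)
  have "(-1)^(Suc n) * ((-1/2::real) gchoose (Suc n)) = (-1)^n * ((-1/2) gchoose n) * (2*n+1)/(2*n+2)"
    unfolding g by (simp add: field_simps)
  then show ?case using Suc by (simp add: cc_Suc)
qed simp

lemma cc_bounds: "0 \<le> cc n \<and> cc n \<le> 1"
proof (induction n)
  case (Suc n)
  have r: "cc (Suc n) = cc n * ((2*real n+1)/(2*n+2))" by (simp add: cc_Suc)
  have q: "0 \<le> (2*real n+1)/(2*n+2)" "(2*real n+1)/(2*n+2) \<le> 1" by simp_all
  have "0 \<le> cc n * ((2*real n+1)/(2*n+2))" using Suc q by simp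
  moreover have "cc n * ((2*real n+1)/(2*n+2)) \<le> 1" using Suc q by (intro mult_le_one) auto
  ultimately show ?case unfolding r by simp
qed simp

lemma h_sums: "\<bar>x\<bar> < 1 \<Longrightarrow> (\<lambda>n. cc n * x^n) sums (1 / sqrt (1 - x))"
proof -
  assume x: "\<bar>x\<bar> < 1"
  hence "\<bar>-x\<bar> < 1" by simp
  from gen_binomial_real[OF this, of "-(1/2)"]
  have s: "(\<lambda>n. ((-(1/2)) gchoose n) * (-x)^n) sums (1 + - x) powr (-(1/2))" .
  have "((-(1/2)) gchoose n) * (-x)^n = cc n * x^n" for n
    unfolding cc_gchoose power_minus[of x n] by (simp add: mult_ac)
  hence e1: "(\<lambda>n. ((-(1/2)) gchoose n) * (-x)^n) = (\<lambda>n. cc n * x^n)" by (rule ext)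
  have "(1 + - x) powr (-(1/2)) = 1 / (1 - x) powr (1/2)" by (simp add: powr_minus_divide)
  also have "(1 - x) powr (1/2) = sqrt (1 - x)" by (rule powr_half_sqrt) (use x in simp)
  finally have e2: "(1 + - x) powr (-(1/2)) = 1 / sqrt (1 - x)" .
  show ?thesis using s unfolding e1 e2 .
qed

lemma summable_geom_bound:
  fixes a :: "nat \<Rightarrow> real"
  assumes "\<And>n. \<bar>a n\<bar> \<le> 1" "\<bar>x\<bar> < 1"
  shows "summable (\<lambda>n. a n * x^n)"
proof (rule summable_comparison_test[of _ "\<lambda>n. \<bar>x\<bar>^n"])
  show "\<exists>N. \<forall>n\<ge>N. norm (a n * x^n) \<le> \<bar>x\<bar>^n"
    using assms(1) by (auto simp: abs_mult power_abs intro!: mult_left_le_one_le)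
  show "summable (\<lambda>n. \<bar>x\<bar>^n)" using assms(2) by (simp add: summable_geometric)
qed

lemma powser_deriv:
  fixes a :: "nat \<Rightarrow> real"
  assumes "\<And>n. \<bar>a n * real (Suc n)\<bar> \<le> 1" "\<bar>x\<bar> < 1"
  shows "DERIV (\<lambda>x. \<Sum>n. a n * x^Suc n) x :> (\<Sum>n. a n * real (Suc n) * x^n)"
  by (rule DERIV_power_series'[where R=1]) (use assms summable_geom_bound in auto)

lemma powser_xmult:
  fixes b :: "nat \<Rightarrow> real"
  assumes "summable (\<lambda>n. b n * x^n)"
  shows "x * (\<Sum>n. b n * x^n) = (\<Sum>n. b n * x^Suc n)"
proof -
  have "(\<Sum>n. x * (b n * x^n)) = x * (\<Sum>n. b n * x^n)" by (rule suminf_mult[OF assms])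
  moreover have "(\<lambda>n. x * (b n * x^n)) = (\<lambda>n. b n * x^Suc n)" by (rule ext) (simp only: power_Suc mult.left_commute)
  ultimately show ?thesis by simp
qed
lemma inv_sq_sums: "(\<lambda>n. 1 / real (Suc n)^2) sums (pi^2 / 6)"
proof -
  have e: "(\<lambda>n. 1 / real ((n+1)^2)) = (\<lambda>n. 1 / real (Suc n)^2)"
    by (rule ext) (simp only: of_nat_power Suc_eq_plus1)
  show ?thesis using inverse_squares_sums unfolding e .
qed

lemma summable_inv_sq: "summable (\<lambda>n. 1 / real (Suc n)^2)"
  using sums_summable[OF inv_sq_sums] .

lemma powser_cont:
  fixes a :: "nat \<Rightarrow> real"
  assumes "\<And>n. \<bar>a n\<bar> \<le> 1 / real (Suc n)^2"
  shows "continuous_on {-1..1} (\<lambda>x. \<Sum>n. a n * x^Suc n)"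
proof (rule uniform_limit_theorem)
  show "uniform_limit {-1..1} (\<lambda>N x. \<Sum>n<N. a n * x^Suc n) (\<lambda>x. \<Sum>n. a n * x^Suc n) sequentially"
  proof (rule Weierstrass_m_test[OF _ summable_inv_sq])
    fix n :: nat and x :: real assume x: "x \<in> {-1..1}"
    have "\<bar>x\<bar>^Suc n \<le> 1" using x by (intro power_le_one) auto
    hence "\<bar>a n\<bar> * \<bar>x\<bar>^Suc n \<le> \<bar>a n\<bar>" by (intro mult_left_le) auto
    thus "norm (a n * x^Suc n) \<le> 1 / real (Suc n)^2"
      using assms[of n] by (simp add: abs_mult power_abs del: of_nat_Suc)
  qed
qed (auto intro!: continuous_intros always_eventually)

definition Hs :: "real \<Rightarrow> real" where "Hs x = (\<Sum>n. (cc n / real (Suc n)) * x^Suc n)"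
definition Gs :: "real \<Rightarrow> real" where "Gs x = (\<Sum>n. (cc n / real (Suc n)^2) * x^Suc n)"
definition Fs :: "real \<Rightarrow> real" where "Fs x = (\<Sum>n. (cc n / real (Suc n)^3) * x^Suc n)"
definition Ls :: "real \<Rightarrow> real" where "Ls x = (\<Sum>n. (1 / real (Suc n)^2) * x^Suc n)"
definition Ld :: "real \<Rightarrow> real" where "Ld x = (\<Sum>n. (1 / real (Suc n)) * x^n)"

lemma cc_abs: "\<bar>cc n\<bar> \<le> 1" using cc_bounds[of n] by simp

lemma div_Suc_le: "\<bar>cc n / real (Suc n) ^ k\<bar> \<le> 1"
proof -
  have "1 \<le> real (Suc n) ^ k" by (intro one_le_power) simp
  hence "\<bar>cc n\<bar> \<le> real (Suc n) ^ k" using cc_abs[of n] by linarith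
  hence "\<bar>cc n\<bar> / real (Suc n) ^ k \<le> 1"
    by (simp add: divide_le_eq del: of_nat_Suc)
  thus ?thesis by (simp add: abs_divide del: of_nat_Suc)
qed

lemma div_Suc1: "\<bar>cc n / real (Suc n)\<bar> \<le> 1"
  using div_Suc_le[of n 1] by simp

lemma DH: "\<bar>x\<bar> < 1 \<Longrightarrow> DERIV Hs x :> 1 / sqrt (1 - x)"
proof -
  assume x: "\<bar>x\<bar> < 1"
  have "DERIV Hs x :> (\<Sum>n. (cc n / real (Suc n)) * real (Suc n) * x^n)"
    unfolding Hs_def by (rule powser_deriv[OF _ x]) (simp add: cc_abs del: of_nat_Suc)
  also have "(\<lambda>n. (cc n / real (Suc n)) * real (Suc n) * x^n) = (\<lambda>n. cc n * x^n)"
    by (simp del: of_nat_Suc)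
  also have "(\<Sum>n. cc n * x^n) = 1 / sqrt (1 - x)"
    using h_sums[OF x] sums_unique by metis
  finally show ?thesis .
qed

lemma DG: "\<bar>x\<bar> < 1 \<Longrightarrow> \<exists>D. DERIV Gs x :> D \<and> x * D = Hs x"
proof -
  assume x: "\<bar>x\<bar> < 1"
  have "DERIV Gs x :> (\<Sum>n. (cc n / real (Suc n)^2) * real (Suc n) * x^n)"
    unfolding Gs_def
  proof (rule powser_deriv[OF _ x])
    fix n
    have e2: "cc n / real (Suc n)^2 * real (Suc n) = cc n / real (Suc n)"
      by (simp add: power2_eq_square del: of_nat_Suc)
    show "\<bar>cc n / real (Suc n)^2 * real (Suc n)\<bar> \<le> 1" unfolding e2 by (rule div_Suc1)
  qed
  moreover have "(\<lambda>n. (cc n / real (Suc n)^2) * real (Suc n) * x^n) = (\<lambda>n. (cc n / real (Suc n)) * x^n)"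
    by (simp add: power2_eq_square del: of_nat_Suc)
  moreover have "x * (\<Sum>n. (cc n / real (Suc n)) * x^n) = Hs x"
    unfolding Hs_def by (rule powser_xmult) (rule summable_geom_bound[OF _ x], rule div_Suc1)
  ultimately show ?thesis by auto
qed

lemma DF: "\<bar>x\<bar> < 1 \<Longrightarrow> \<exists>D. DERIV Fs x :> D \<and> x * D = Gs x"
proof -
  assume x: "\<bar>x\<bar> < 1"
  have e: "cc n / real (Suc n)^3 * real (Suc n) = cc n / real (Suc n)^2" for n
    by (simp add: power2_eq_square power3_eq_cube del: of_nat_Suc)
  have "DERIV Fs x :> (\<Sum>n. (cc n / real (Suc n)^3) * real (Suc n) * x^n)"
    unfolding Fs_def by (rule powser_deriv[OF _ x]) (simp only: e div_Suc_le)
  moreover have "(\<lambda>n. (cc n / real (Suc n)^3) * real (Suc n) * x^n) = (\<lambda>n. (cc n / real (Suc n)^2) * x^n)"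
    by (simp only: e)
  moreover have "x * (\<Sum>n. (cc n / real (Suc n)^2) * x^n) = Gs x"
    unfolding Gs_def by (rule powser_xmult) (rule summable_geom_bound[OF _ x], rule div_Suc_le)
  ultimately show ?thesis by auto
qed

lemma log_sums: "\<bar>x\<bar> < 1 \<Longrightarrow> (\<lambda>n. (1 / real (Suc n)) * x^Suc n) sums (- ln (1 - x))"
proof -
  assume x: "\<bar>x\<bar> < 1"
  hence "\<bar>-x\<bar> < 1" by simp
  from ln_series'[OF this] have "(\<lambda>n. - (x^n) / of_nat n) sums ln (1 - x)" by simp
  hence "(\<lambda>n. - (x^Suc n) / of_nat (Suc n)) sums ln (1 - x)"
    by (subst sums_Suc_iff) simp
  from sums_minus[OF this] show ?thesis by (simp add: field_simps del: of_nat_Suc)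
qed

lemma DL: "\<bar>x\<bar> < 1 \<Longrightarrow> DERIV Ls x :> Ld x"
proof -
  assume x: "\<bar>x\<bar> < 1"
  have e: "1 / real (Suc n)^2 * real (Suc n) = 1 / real (Suc n)" for n
    by (simp add: power2_eq_square del: of_nat_Suc)
  have "DERIV Ls x :> (\<Sum>n. (1 / real (Suc n)^2) * real (Suc n) * x^n)"
    unfolding Ls_def by (rule powser_deriv[OF _ x]) (simp only: e, simp del: of_nat_Suc)
  thus ?thesis unfolding Ld_def by (simp only: e)
qed

lemma Ld_eq: "\<bar>x\<bar> < 1 \<Longrightarrow> x * Ld x = - ln (1 - x)"
proof -
  assume x: "\<bar>x\<bar> < 1"
  have "x * Ld x = (\<Sum>n. (1 / real (Suc n)) * x^Suc n)"
    unfolding Ld_def by (rule powser_xmult) (rule summable_geom_bound[OF _ x], simp del: of_nat_Suc)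
  also have "\<dots> = - ln (1 - x)" using log_sums[OF x] sums_unique by metis
  finally show ?thesis .
qed

lemma Ls_chain [derivative_intros]:
  assumes "(g has_real_derivative g') (at t)" "\<bar>g t\<bar> < 1"
  shows "((\<lambda>t. Ls (g t)) has_real_derivative (Ld (g t) * g')) (at t)"
  using DERIV_chain2[OF DL[OF assms(2)] assms(1)] .

lemma eq_by_deriv:
  fixes f g d :: "real \<Rightarrow> real"
  assumes x: "0 \<le> x" "x < 1"
    and cf: "\<And>t. 0 \<le> t \<Longrightarrow> t < 1 \<Longrightarrow> isCont f t"
    and cg: "\<And>t. 0 \<le> t \<Longrightarrow> t < 1 \<Longrightarrow> isCont g t"
    and df: "\<And>t. 0 < t \<Longrightarrow> t < 1 \<Longrightarrow> DERIV f t :> d t"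
    and dg: "\<And>t. 0 < t \<Longrightarrow> t < 1 \<Longrightarrow> DERIV g t :> d t"
    and z: "f 0 = g 0"
  shows "f x = g x"
proof (cases "x = 0")
  case True thus ?thesis using z by simp
next
  case False
  hence "0 < x" using x by simp
  have "(\<lambda>t. f t - g t) x = (\<lambda>t. f t - g t) 0"
  proof (rule DERIV_isconst2[OF \<open>0 < x\<close>])
    show "continuous_on {0..x} (\<lambda>t. f t - g t)"
      using cf cg x by (intro continuous_at_imp_continuous_on ballI continuous_intros) auto
    fix t assume t: "0 < t" "t < x"
    show "DERIV (\<lambda>t. f t - g t) t :> 0"
      using DERIV_diff[OF df dg, of t] t x by simp
  qed (use x in auto)
  thus ?thesis using z by simp
qed


lemma DERIV_eqD: "DERIV f x :> a \<Longrightarrow> a = b \<Longrightarrow> DERIV f x :> b" by simp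

lemma Dsqrt: "t < 1 \<Longrightarrow> DERIV (\<lambda>t. sqrt (1 - t)) t :> -1 / (2 * sqrt (1 - t))"
proof -
  assume t: "t < 1"
  have d: "DERIV (\<lambda>t. 1 - t) t :> -1" by (auto intro!: derivative_eq_intros)
  have "DERIV (\<lambda>t. sqrt (1 - t)) t :> inverse (sqrt (1 - t)) / 2 * -1"
    by (rule DERIV_chain2[OF DERIV_real_sqrt d]) (use t in simp)
  thus ?thesis by (rule DERIV_eqD) (simp add: divide_simps)
qed

lemma Dq: "t < 1 \<Longrightarrow> DERIV (\<lambda>t. (1 + sqrt (1 - t)) / 2) t :> -1 / (4 * sqrt (1 - t))"
proof -
  assume t: "t < 1"
  have "DERIV (\<lambda>t. (1 + sqrt (1 - t)) / 2) t :> (0 + -1 / (2 * sqrt (1 - t))) / 2"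
    by (intro DERIV_cdivide DERIV_add DERIV_const Dsqrt t)
  thus ?thesis by (rule DERIV_eqD) simp
qed

lemma Dw: "t < 1 \<Longrightarrow> DERIV (\<lambda>t. (1 - sqrt (1 - t)) / 2) t :> 1 / (4 * sqrt (1 - t))"
proof -
  assume t: "t < 1"
  have "DERIV (\<lambda>t. (1 - sqrt (1 - t)) / 2) t :> (0 - -1 / (2 * sqrt (1 - t))) / 2"
    by (intro DERIV_cdivide DERIV_diff DERIV_const Dsqrt t)
  thus ?thesis by (rule DERIV_eqD) simp
qed

lemma Dlq: "t < 1 \<Longrightarrow> DERIV (\<lambda>t. ln ((1 + sqrt (1 - t)) / 2)) t :> 1 / ((1 + sqrt (1 - t)) / 2) * (-1 / (4 * sqrt (1 - t)))"
proof -
  assume t: "t < 1"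
  have "0 \<le> sqrt (1 - t)" using t by simp
  hence "0 < 1 + sqrt (1 - t)" by linarith
  hence "0 < (1 + sqrt (1 - t)) / 2" by simp
  from DERIV_chain2[OF DERIV_ln_divide[OF this] Dq[OF t]] show ?thesis .
qed

lemma Hs_closed: assumes "0 \<le> x" "x < 1" shows "Hs x = 2 - 2 * sqrt (1 - x)"
proof (rule eq_by_deriv[where d = "\<lambda>t. 1 / sqrt (1 - t)" and f = Hs and g = "\<lambda>t. 2 - 2 * sqrt (1 - t)"])
  fix t :: real assume t: "0 \<le> t" "t < 1"
  show "isCont Hs t" using DH[of t] t by (intro DERIV_isCont) auto
  show "isCont (\<lambda>t. 2 - 2 * sqrt (1 - t)) t" by (intro continuous_intros)
next
  fix t :: real assume t: "0 < t" "t < 1"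
  show "DERIV Hs t :> 1 / sqrt (1 - t)" using DH[of t] t by auto
  have "DERIV (\<lambda>t. 2 - 2 * sqrt (1 - t)) t :> 0 - 2 * (-1 / (2 * sqrt (1 - t)))"
    by (intro DERIV_diff DERIV_const DERIV_cmult Dsqrt) (use t in auto)
  thus "DERIV (\<lambda>t. 2 - 2 * sqrt (1 - t)) t :> 1 / sqrt (1 - t)" by (rule DERIV_eqD) simp
qed (use assms in \<open>auto simp: Hs_def\<close>)

lemma Gs_closed: assumes "0 \<le> x" "x < 1" shows "Gs x = 4 * (1 - sqrt (1 - x)) + 4 * ln ((1 + sqrt (1 - x)) / 2)"
proof (rule eq_by_deriv[where d = "\<lambda>t. 2 / (1 + sqrt (1 - t))" and f = Gs and g = "\<lambda>t. 4 * (1 - sqrt (1 - t)) + 4 * ln ((1 + sqrt (1 - t)) / 2)"])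
  fix t :: real assume t: "0 \<le> t" "t < 1"
  show "isCont Gs t" using DG[of t] t by (auto intro: DERIV_isCont)
  have "0 \<le> sqrt (1 - t)" using t by simp
  hence "0 < 1 + sqrt (1 - t)" by linarith
  hence "0 < (1 + sqrt (1 - t)) / 2" by simp
  thus "isCont (\<lambda>t. 4 * (1 - sqrt (1 - t)) + 4 * ln ((1 + sqrt (1 - t)) / 2)) t"
    by (intro continuous_intros) auto
next
  fix t :: real assume t: "0 < t" "t < 1"
  define s where "s = sqrt (1 - t)"
  have s: "0 < s" "s < 1" "s^2 = 1 - t" using t by (auto simp: s_def)
  have tt: "t = (1 - s) * (1 + s)" using s by (simp add: algebra_simps power2_eq_square)
  obtain D where D: "DERIV Gs t :> D" "t * D = Hs t" using DG[of t] t by auto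
  have h: "t * D = 2 - 2 * s" using D(2) Hs_closed[of t] t by (simp add: s_def)
  have h2: "t * (2 / (1 + s)) = 2 - 2 * s" unfolding tt using s by (simp add: field_simps)
  have "t * D = t * (2 / (1 + s))" using h h2 by simp
  hence "D = 2 / (1 + s)" using t by (metis mult_left_cancel order_less_irrefl)
  thus "DERIV Gs t :> 2 / (1 + sqrt (1 - t))" using D(1) by (simp add: s_def)
  have "DERIV (\<lambda>t. 4 * (1 - sqrt (1 - t)) + 4 * ln ((1 + sqrt (1 - t)) / 2)) t
      :> 4 * (0 - -1 / (2 * sqrt (1 - t))) + 4 * (1 / ((1 + sqrt (1 - t)) / 2) * (-1 / (4 * sqrt (1 - t))))"
    by (intro DERIV_add DERIV_cmult DERIV_diff DERIV_const Dsqrt Dlq) (use t in auto)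
  moreover have "4 * (0 - -1 / (2 * s)) + 4 * (1 / ((1 + s) / 2) * (-1 / (4 * s))) = 2 / (1 + s)"
    using s by (simp add: divide_simps; simp add: algebra_simps)
  ultimately show "DERIV (\<lambda>t. 4 * (1 - sqrt (1 - t)) + 4 * ln ((1 + sqrt (1 - t)) / 2)) t :> 2 / (1 + sqrt (1 - t))"
    by (simp add: s_def)
qed (use assms in \<open>auto simp: Gs_def\<close>)

definition Phi :: "real \<Rightarrow> real" where
  "Phi t = 8 * (1 - sqrt (1 - t)) + 8 * ln ((1 + sqrt (1 - t)) / 2)
           - 4 * Ls ((1 - sqrt (1 - t)) / 2) + 2 * (ln ((1 + sqrt (1 - t)) / 2))^2"

lemma half_abs: "0 \<le> (a::real) \<Longrightarrow> a < 2 \<Longrightarrow> \<bar>a / 2\<bar> < 1" by simp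

lemma w_bound: "0 \<le> t \<Longrightarrow> t < 1 \<Longrightarrow> \<bar>(1 - sqrt (1 - t)) / 2\<bar> < 1"
proof -
  assume t: "0 \<le> t" "t < 1"
  have "sqrt (1 - t) \<le> 1" using t by simp
  moreover have "0 \<le> sqrt (1 - t)" using t by simp
  ultimately have "0 \<le> 1 - sqrt (1 - t)" "1 - sqrt (1 - t) < 2" by linarith+
  thus ?thesis by (rule half_abs)
qed

lemma alg: fixes s L :: real assumes "0<s" "s<1" shows "8 * (0 - -1 / (2 * s)) + 8 * (1 / ((1 + s) / 2) * (-1 / (4 * s))) - 4 * ((- 2 * L / (1 - s)) * (1 / (4 * s))) + 2 * (of_nat 2 * ((1 / ((1 + s) / 2) * (-1 / (4 * s))) * L ^ (2 - Suc 0))) = (4 * (1 - s) + 4 * L) / ((1 - s) * (1 + s))"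
proof -
  have a: "1 - s \<noteq> 0" "1 + s \<noteq> 0" "s \<noteq> 0" using assms by auto
  have e1: "8 * (0 - -1 / (2 * s)) = 4 / s" using a by simp
  have e2: "8 * (1 / ((1 + s) / 2) * (-1 / (4 * s))) = - 4 / ((1 + s) * s)" using a by (simp add: divide_simps; simp add: algebra_simps)
  have e3: "4 * ((- 2 * L / (1 - s)) * (1 / (4 * s))) = - 2 * L / ((1 - s) * s)" using a by (simp add: divide_simps; simp add: algebra_simps)
  have e4: "2 * (of_nat 2 * ((1 / ((1 + s) / 2) * (-1 / (4 * s))) * L ^ (2 - Suc 0))) = - 2 * L / ((1 + s) * s)" using a by (simp add: divide_simps; simp add: algebra_simps)
  have e5: "4 / s + - 4 / ((1 + s) * s) - - 2 * L / ((1 - s) * s) + - 2 * L / ((1 + s) * s) = (4 * (1 - s) + 4 * L) / ((1 - s) * (1 + s))"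
    using a by (simp add: divide_simps; simp add: algebra_simps)
  show ?thesis unfolding e1 e2 e3 e4 e5 ..
qed

lemma Fs_closed: assumes "0 \<le> x" "x < 1" shows "Fs x = Phi x"
proof (rule eq_by_deriv[where d = "\<lambda>t. Gs t / t" and f = Fs and g = Phi])
  fix t :: real assume t: "0 \<le> t" "t < 1"
  show "isCont Fs t" using DF[of t] t by (auto intro: DERIV_isCont)
  have "0 \<le> sqrt (1 - t)" using t by simp
  hence "0 < 1 + sqrt (1 - t)" by linarith
  hence q: "0 < (1 + sqrt (1 - t)) / 2" by simp
  have cL: "isCont Ls ((1 - sqrt (1 - t)) / 2)" using DL[OF w_bound[OF t]] by (rule DERIV_isCont)
  have cw: "isCont (\<lambda>t. (1 - sqrt (1 - t)) / 2) t" by (intro continuous_intros) auto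
  have cL2: "isCont (\<lambda>t. Ls ((1 - sqrt (1 - t)) / 2)) t"
    using isCont_o2[OF cw cL] .
  show "isCont Phi t" unfolding Phi_def using q cL2 by (intro continuous_intros) auto
next
  fix t :: real assume t: "0 < t" "t < 1"
  define s where "s = sqrt (1 - t)"
  have s: "0 < s" "s < 1" "s^2 = 1 - t" using t by (auto simp: s_def)
  have tt: "t = (1 - s) * (1 + s)" using s by (simp add: algebra_simps power2_eq_square)
  obtain D where D: "DERIV Fs t :> D" "t * D = Gs t" using DF[of t] t by auto
  have "D = Gs t / t" using D(2) t by (simp add: field_simps)
  thus "DERIV Fs t :> Gs t / t" using D(1) by simp
  have wb: "\<bar>(1 - sqrt (1 - t)) / 2\<bar> < 1" using w_bound[of t] t by simp
  have t2: "t < 1" using t by simp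
  have d1: "DERIV (\<lambda>t. 8 * (1 - sqrt (1 - t))) t :> 8 * (0 - -1 / (2 * sqrt (1 - t)))"
    by (intro DERIV_cmult DERIV_diff DERIV_const Dsqrt t2)
  have d2: "DERIV (\<lambda>t. 8 * ln ((1 + sqrt (1 - t)) / 2)) t :> 8 * (1 / ((1 + sqrt (1 - t)) / 2) * (-1 / (4 * sqrt (1 - t))))"
    using DERIV_cmult[OF Dlq[OF t2]] .
  have d3: "DERIV (\<lambda>t. 4 * Ls ((1 - sqrt (1 - t)) / 2)) t :> 4 * (Ld ((1 - sqrt (1 - t)) / 2) * (1 / (4 * sqrt (1 - t))))"
    using DERIV_cmult[OF Ls_chain[OF Dw[OF t2] wb]] .
  have d4: "DERIV (\<lambda>t. 2 * (ln ((1 + sqrt (1 - t)) / 2))^2) t :> 2 * (of_nat 2 * ((1 / ((1 + sqrt (1 - t)) / 2) * (-1 / (4 * sqrt (1 - t)))) * (ln ((1 + sqrt (1 - t)) / 2)) ^ (2 - Suc 0)))"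
    using DERIV_cmult[OF DERIV_power[OF Dlq[OF t2]]] .
  have P: "Phi = (\<lambda>t. 8 * (1 - sqrt (1 - t)) + 8 * ln ((1 + sqrt (1 - t)) / 2)
           - 4 * Ls ((1 - sqrt (1 - t)) / 2) + 2 * (ln ((1 + sqrt (1 - t)) / 2))^2)"
    by (rule ext) (simp only: Phi_def)
  have dP: "DERIV Phi t :> 8 * (0 - -1 / (2 * sqrt (1 - t)))
       + 8 * (1 / ((1 + sqrt (1 - t)) / 2) * (-1 / (4 * sqrt (1 - t))))
       - 4 * (Ld ((1 - sqrt (1 - t)) / 2) * (1 / (4 * sqrt (1 - t))))
       + 2 * (of_nat 2 * ((1 / ((1 + sqrt (1 - t)) / 2) * (-1 / (4 * sqrt (1 - t)))) * (ln ((1 + sqrt (1 - t)) / 2)) ^ (2 - Suc 0)))"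
    unfolding P by (rule DERIV_add[OF DERIV_diff[OF DERIV_add[OF d1 d2] d3] d4])
  have qq: "1 - (1 - s) / 2 = (1 + s) / 2" by (simp add: field_simps)
  have w: "(1 - s) / 2 * Ld ((1 - s) / 2) = - ln ((1 + s) / 2)"
  proof -
    have "\<bar>(1 - s) / 2\<bar> < 1" using s by simp
    from Ld_eq[OF this] show ?thesis unfolding qq .
  qed
  have w2: "(1 - s) * Ld ((1 - s) / 2) = - 2 * ln ((1 + s) / 2)"
  proof -
    have "(1 - s) * Ld ((1 - s) / 2) = 2 * ((1 - s) / 2 * Ld ((1 - s) / 2))" by simp
    also have "\<dots> = - 2 * ln ((1 + s) / 2)" unfolding w by simp
    finally show ?thesis .
  qed
  have ns: "1 - s \<noteq> 0" using s by simp
  have "Ld ((1 - s) / 2) = ((1 - s) * Ld ((1 - s) / 2)) / (1 - s)" using ns by simp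
  also have "\<dots> = - 2 * ln ((1 + s) / 2) / (1 - s)" unfolding w2 ..
  finally have Ldv: "Ld ((1 - s) / 2) = - 2 * ln ((1 + s) / 2) / (1 - s)" .
  have G: "Gs t = 4 * (1 - s) + 4 * ln ((1 + s) / 2)" using Gs_closed[of t] t by (simp add: s_def)
  have GT: "Gs t / t = (4 * (1 - s) + 4 * ln ((1 + s) / 2)) / t" unfolding G ..
  also have "\<dots> = (4 * (1 - s) + 4 * ln ((1 + s) / 2)) / ((1 - s) * (1 + s))"
    using tt by simp
  finally have GT2: "Gs t / t = (4 * (1 - s) + 4 * ln ((1 + s) / 2)) / ((1 - s) * (1 + s))" .
  have "8 * (0 - -1 / (2 * s))
       + 8 * (1 / ((1 + s) / 2) * (-1 / (4 * s)))
       - 4 * (Ld ((1 - s) / 2) * (1 / (4 * s)))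
       + 2 * (of_nat 2 * ((1 / ((1 + s) / 2) * (-1 / (4 * s))) * (ln ((1 + s) / 2)) ^ (2 - Suc 0))) = Gs t / t"
    unfolding Ldv GT2 by (rule alg[OF s(1) s(2)])
  hence eqv: "8 * (0 - -1 / (2 * sqrt (1 - t)))
       + 8 * (1 / ((1 + sqrt (1 - t)) / 2) * (-1 / (4 * sqrt (1 - t))))
       - 4 * (Ld ((1 - sqrt (1 - t)) / 2) * (1 / (4 * sqrt (1 - t))))
       + 2 * (of_nat 2 * ((1 / ((1 + sqrt (1 - t)) / 2) * (-1 / (4 * sqrt (1 - t)))) * (ln ((1 + sqrt (1 - t)) / 2)) ^ (2 - Suc 0))) = Gs t / t"
    unfolding s_def .
  show "DERIV Phi t :> Gs t / t" by (rule DERIV_eqD[OF dP eqv])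
qed (use assms in \<open>auto simp: Fs_def Phi_def Ls_def\<close>)


lemma Ls_cont: "continuous_on {-1..1} Ls"
  unfolding Ls_def by (rule powser_cont) (simp del: of_nat_Suc)

lemma fs_bound: "\<bar>cc n / real (Suc n)^3\<bar> \<le> 1 / real (Suc n)^2"
proof -
  have p: "real (Suc n)^2 \<le> real (Suc n)^3" by (rule power_increasing) auto
  have "\<bar>cc n / real (Suc n)^3\<bar> = \<bar>cc n\<bar> / real (Suc n)^3" by (simp add: abs_divide del: of_nat_Suc)
  also have "\<dots> \<le> 1 / real (Suc n)^3" by (rule divide_right_mono) (use cc_abs in auto)
  also have "\<dots> \<le> 1 / real (Suc n)^2" by (rule divide_left_mono[OF p]) auto
  finally show ?thesis .
qed

lemma Fs_cont: "continuous_on {-1..1} Fs"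
  unfolding Fs_def by (rule powser_cont) (rule fs_bound)

lemma Ls_1': "(\<Sum>n. (1 / real (Suc n)^2) * 1^Suc n) = pi^2 / 6"
  unfolding power_one mult_1_right using sums_unique[OF inv_sq_sums] by simp
lemma Ls_1: "Ls 1 = pi^2 / 6"
  unfolding Ls_def by (rule Ls_1')

lemma Li2_half: "2 * Ls (1/2) + (ln 2)^2 = pi^2 / 6"
proof -
  define E where "E y = Ls y + Ls (1 - y) + ln y * ln (1 - y)" for y :: real
  have dE: "DERIV E y :> 0" if y: "0 < y" "y < 1" for y
  proof -
    have b1: "\<bar>y\<bar> < 1" "\<bar>1 - y\<bar> < 1" using y by auto
    have d2: "DERIV (\<lambda>y. 1 - y) y :> -1" by (auto intro!: derivative_eq_intros)
    have "DERIV E y :> Ld y + Ld (1 - y) * -1 + (1 / y * ln (1 - y) + 1 / (1 - y) * -1 * ln y)"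
      unfolding E_def
      by (intro DERIV_add DL b1 Ls_chain[where g = "\<lambda>y. 1 - y", OF d2] DERIV_mult DERIV_ln_divide
          DERIV_chain2[OF DERIV_ln_divide d2]) (use y in auto)
    moreover have "Ld y = - ln (1 - y) / y" using Ld_eq[OF b1(1)] y by (simp add: field_simps)
    moreover have "Ld (1 - y) = - ln y / (1 - y)" using Ld_eq[OF b1(2)] y by (simp add: field_simps)
    ultimately show ?thesis using y by (simp add: field_simps)
  qed
  have const: "E y = E (1/2)" if "0 < y" "y < 1" for y
    by (rule DERIV_isconst3[of 0 1]) (use that dE in auto)
  define u where "u k = 1 / (real k + 2)" for k :: nat
  have u: "0 < u k" "u k < 1" for k unfolding u_def by (auto simp: field_simps)
  have uI: "u k \<in> {-1..1}" "1 - u k \<in> {-1..1}" for k using u[of k] by auto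
  have ul: "u \<longlonglongrightarrow> 0" unfolding u_def by real_asymp
  have l1: "(\<lambda>k. Ls (u k)) \<longlonglongrightarrow> Ls 0"
    by (rule continuous_on_tendsto_compose[OF Ls_cont ul]) (use uI in \<open>auto intro!: always_eventually\<close>)
  have ul2: "(\<lambda>k. 1 - u k) \<longlonglongrightarrow> 1" using tendsto_diff[OF tendsto_const ul, of 1] by simp
  have l2: "(\<lambda>k. Ls (1 - u k)) \<longlonglongrightarrow> Ls 1"
    by (rule continuous_on_tendsto_compose[OF Ls_cont ul2]) (use uI in \<open>auto intro!: always_eventually\<close>)
  have l3: "(\<lambda>k. ln (u k) * ln (1 - u k)) \<longlonglongrightarrow> 0" unfolding u_def by real_asymp
  have "(\<lambda>k. E (u k)) \<longlonglongrightarrow> Ls 0 + Ls 1 + 0"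
    unfolding E_def by (intro tendsto_add l1 l2 l3)
  moreover have "(\<lambda>k. E (u k)) = (\<lambda>k. E (1/2))" by (intro ext const u)
  ultimately have "(\<lambda>k. E (1/2)) \<longlonglongrightarrow> Ls 0 + Ls 1 + 0" by simp
  hence "E (1/2) = Ls 0 + Ls 1 + 0" by (rule LIMSEQ_unique[OF tendsto_const])
  have L0: "Ls 0 = 0" by (simp add: Ls_def)
  have EE: "E (1/2) = 2 * Ls (1/2) + (ln 2)^2" by (simp add: E_def ln_div power2_eq_square)
  have "2 * Ls (1/2) + (ln 2)^2 = E (1/2)" by (rule EE[symmetric])
  also have "\<dots> = Ls 0 + Ls 1 + 0" by fact
  also have "\<dots> = pi^2 / 6" unfolding L0 Ls_1 by simp
  finally show ?thesis .
qed

theorem mainTheorem3: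
  shows "(\<lambda>n::nat. real ((2*n) choose n) / ((real n + 1) ^ 3 * 2 ^ (2*n)))
           sums (8 - 8 * ln 2 - pi\<^sup>2 / 3 + 4 * (ln 2)\<^sup>2)"
proof -
  define v where "v k = 1 - 1 / (real k + 2)" for k :: nat
  have v: "0 \<le> v k" "v k < 1" for k unfolding v_def by (auto simp: field_simps)
  have vI: "v k \<in> {-1..1}" for k using v[of k] by auto
  have vl: "v \<longlonglongrightarrow> 1" unfolding v_def by real_asymp
  have l1: "(\<lambda>k. Fs (v k)) \<longlonglongrightarrow> Fs 1"
    by (rule continuous_on_tendsto_compose[OF Fs_cont vl]) (use vI in \<open>auto intro!: always_eventually\<close>)
  have sv: "(\<lambda>k. sqrt (1 - v k)) \<longlonglongrightarrow> 0" unfolding v_def by real_asymp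
  have sv1: "(\<lambda>k. 1 - sqrt (1 - v k)) \<longlonglongrightarrow> 1" using tendsto_diff[OF tendsto_const sv, of 1] by simp
  have cL: "isCont Ls ((1 - 0) / 2)" by (rule DERIV_isCont[OF DL]) simp
  have lL: "(\<lambda>k. Ls ((1 - sqrt (1 - v k)) / 2)) \<longlonglongrightarrow> Ls ((1 - 0) / 2)"
    by (rule isCont_tendsto_compose[OF cL]) (auto intro!: tendsto_intros sv1)
  have lq: "(\<lambda>k. ln ((1 + sqrt (1 - v k)) / 2)) \<longlonglongrightarrow> ln ((1 + 0) / 2)"
    by (intro tendsto_intros sv) auto
  have lim: "(\<lambda>k. Phi (v k)) \<longlonglongrightarrow> 8 * 1 + 8 * ln ((1 + 0) / 2) - 4 * Ls ((1 - 0) / 2) + 2 * (ln ((1 + 0) / 2))^2"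
    unfolding Phi_def
    by (rule tendsto_add[OF tendsto_diff[OF tendsto_add[OF tendsto_mult[OF tendsto_const sv1] tendsto_mult[OF tendsto_const lq]]
          tendsto_mult[OF tendsto_const lL]] tendsto_mult[OF tendsto_const tendsto_power[OF lq]]])
  have "(\<lambda>k. Phi (v k)) = (\<lambda>k. Fs (v k))" by (intro ext Fs_closed[symmetric] v)
  with lim have "(\<lambda>k. Fs (v k)) \<longlonglongrightarrow> 8 * 1 + 8 * ln ((1 + 0) / 2) - 4 * Ls ((1 - 0) / 2) + 2 * (ln ((1 + 0) / 2))^2"
    by simp
  from LIMSEQ_unique[OF l1 this]
  have F1: "Fs 1 = 8 * 1 + 8 * ln ((1 + 0) / 2) - 4 * Ls ((1 - 0) / 2) + 2 * (ln ((1 + 0) / 2))^2" .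
  have ln2: "ln ((1 + 0) / 2 :: real) = - ln 2" by (simp add: ln_div)
  have Lh: "Ls ((1 - 0) / 2) = Ls (1/2)" by simp
  have F2: "Fs 1 = 8 - 8 * ln 2 - 4 * Ls (1/2) + 2 * (ln 2)^2" using F1 unfolding ln2 Lh by simp
  have val: "Fs 1 = 8 - 8 * ln 2 - pi\<^sup>2 / 3 + 4 * (ln 2)\<^sup>2"
    using F2 Li2_half by linarith
  have summ: "summable (\<lambda>n. cc n / real (Suc n)^3 * 1^Suc n)"
  proof (rule summable_comparison_test[OF _ summable_inv_sq])
    show "\<exists>N. \<forall>n\<ge>N. norm (cc n / real (Suc n)^3 * 1^Suc n) \<le> 1 / real (Suc n)^2"
      using fs_bound by simp
  qed
  have S: "(\<lambda>n. cc n / real (Suc n)^3 * 1^Suc n) sums Fs 1"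
    unfolding Fs_def by (rule summable_sums[OF summ])
  have EQ: "(\<lambda>n. cc n / real (Suc n)^3 * 1^Suc n) = (\<lambda>n::nat. real ((2*n) choose n) / ((real n + 1) ^ 3 * 2 ^ (2*n)))"
  proof
    fix n :: nat
    have "(2::real) ^ (2*n) = 4 ^ n" by (simp add: power_mult)
    thus "cc n / real (Suc n)^3 * 1^Suc n = real ((2*n) choose n) / ((real n + 1) ^ 3 * 2 ^ (2*n))"
      by (simp add: cc_def add.commute)
  qed
  show ?thesis using S unfolding EQ val .
qed

end
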